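(* Let $h>0$, $0<\alpha\le 2$, and $N=2^n$ for a positive integer $n$. Define the kernel $c_m$ ($m\in\mathbb Z$) and the frequency grid $\bar\xi_k$ as in the context, and let \[ \widetilde A^{(N)}_{\alpha,h}=QFT_N^{-1}\,\operatorname{diag}\big(|\bar\xi_0|^\alpha,\ldots,|\bar\xi_{N-1}|^\alpha\big)\,QFT_N . \] Then for all $0\le i,j\le N-1$, \[ (\widetilde A^{(N)}_{\alpha,h})_{ij}=\sum_{\ell\in\mathbb Z} c_{i-j+\ell N}. \] Consequently, with $A^{(N)}_{\alpha,h}$ the $N\times N$ Toeplitz matrix with entries $(A^{(N)}_{\alpha,h})_{ij}=c_{i-j}$, the difference satisfies $(\widetilde A^{(N)}_{\alpha,h}-A^{(N)}_{\alpha,h})_{ij}=\sum_{\ell\neq 0} c_{i-j+\ell N}$.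
   Context: Kernel: for $m\in\mathbb Z$, $c_m=\frac{h}{2\pi}\int_{-\pi/h}^{\pi/h}|\xi|^\alpha e^{i\xi h m}\,d\xi=\frac{h}{\pi}\int_0^{\pi/h}\xi^\alpha\cos(mh\xi)\,d\xi$; these are the convolution coefficients of the semi-discrete fractional Laplacian on the lattice $h\mathbb Z$ (the Fourier multiplier with symbol $|\xi|^\alpha$, $\xi\in[-\pi/h,\pi/h]$). Indices of $N\times N$ matrices run over $\{0,\ldots,N-1\}$. FFT-ordered frequency grid: $\bar\xi_k=2\pi k/(Nh)$ for $0\le k<N/2$ and $\bar\xi_k=2\pi k/(Nh)-2\pi/h$ for $N/2\le k<N$. $QFT_N$ is the unitary $N\times N$ discrete Fourier transform matrix with entries $(QFT_N)_{kj}=N^{-1/2}e^{2\pi i jk/N}$. *)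

theory Defs
  imports "HOL-Analysis.Analysis" "Jordan_Normal_Form.Matrix"
begin

definition kernel_c :: "real \<Rightarrow> real \<Rightarrow> int \<Rightarrow> real" where
  "kernel_c h \<alpha> m = (h / pi) * integral {0..pi / h} (\<lambda>\<xi>. \<xi> powr \<alpha> * cos (real_of_int m * h * \<xi>))"

text \<open>FFT-ordered frequency grid.\<close>
definition xi_bar :: "real \<Rightarrow> nat \<Rightarrow> nat \<Rightarrow> real" where
  "xi_bar h N k = (if real k < real N / 2 then 2 * pi * real k / (real N * h)
                   else 2 * pi * real k / (real N * h) - 2 * pi / h)"

definition QFT :: "nat \<Rightarrow> complex mat" where
  "QFT N = mat N N (\<lambda>(k, j). exp (2 * pi * \<i> * of_nat (j * k) / of_nat N) / of_real (sqrt (real N)))"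

definition mat_inv :: "nat \<Rightarrow> complex mat \<Rightarrow> complex mat" where
  "mat_inv N A = (THE B. B \<in> carrier_mat N N \<and> A * B = 1\<^sub>m N \<and> B * A = 1\<^sub>m N)"

definition A_tilde :: "real \<Rightarrow> real \<Rightarrow> nat \<Rightarrow> complex mat" where
  "A_tilde \<alpha> h N = mat_inv N (QFT N) * mat_diag N (\<lambda>k. of_real (\<bar>xi_bar h N k\<bar> powr \<alpha>)) * QFT N"

definition A_toep :: "real \<Rightarrow> real \<Rightarrow> nat \<Rightarrow> complex mat" where
  "A_toep \<alpha> h N = mat N N (\<lambda>(i, j). of_real (kernel_c h \<alpha> (int i - int j)))"

end

theory Submission
  imports Defs "HOL-Analysis.Analysis"
begin

definition acoef :: "real \<Rightarrow> int \<Rightarrow> real" where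
  "acoef \<alpha> n = (1/pi) * integral {0..pi} (\<lambda>t. t powr \<alpha> * cos (of_int n * t))"

lemma cont_powr_cos: fixes \<alpha> c :: real assumes "0 < \<alpha>" shows "continuous_on S (\<lambda>t::real. \<bar>t\<bar> powr \<alpha> * cos (c * t))"
  using assms by (intro continuous_intros continuous_on_powr' continuous_on_const continuous_on_id) auto

lemma cont_powr_cos0: fixes \<alpha> c :: real assumes "0 < \<alpha>" and "S \<subseteq> {0..}" shows "continuous_on S (\<lambda>t. t powr \<alpha> * cos (c * t))"
proof -
  have "continuous_on S (\<lambda>t::real. \<bar>t\<bar> powr \<alpha> * cos (c * t))" by (rule cont_powr_cos[OF assms(1)])
  then show ?thesis by (rule continuous_on_eq) (use assms(2) in auto)
qed

lemma FTC_I2: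
  fixes \<alpha> x \<delta> :: real
  assumes "0 < \<delta>" "\<delta> \<le> pi" "x \<noteq> 0"
  defines "F \<equiv> (\<lambda>t. t powr \<alpha> * sin (x * t) / x + \<alpha> * (t powr (\<alpha> - 1) * cos (x * t)) / x^2)"
  shows "((\<lambda>t. t powr \<alpha> * cos (x * t) + (\<alpha> * (\<alpha> - 1) / x^2) * (t powr (\<alpha> - 2) * cos (x * t)))
          has_integral (F pi - F \<delta>)) {\<delta>..pi}"
proof (rule fundamental_theorem_of_calculus)
  show "\<delta> \<le> pi" by fact
  fix t assume t: "t \<in> {\<delta>..pi}"
  then have tp: "t > 0" using assms by auto
  have d1: "((\<lambda>t. t powr \<alpha>) has_real_derivative \<alpha> * t powr (\<alpha> - 1)) (at t)"
    by (rule has_real_derivative_powr[OF tp])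
  have d2: "((\<lambda>t. t powr (\<alpha>-1)) has_real_derivative (\<alpha>-1) * t powr (\<alpha> - 1 - 1)) (at t)"
    by (rule has_real_derivative_powr[OF tp])
  have e: "t powr (\<alpha> - 1 - 1) = t powr (\<alpha> - 2)" by simp
  have ds: "((\<lambda>t. sin (x*t)) has_real_derivative cos (x*t) * x) (at t)"
    by (auto intro!: derivative_eq_intros)
  have dc: "((\<lambda>t. cos (x*t)) has_real_derivative - sin (x*t) * x) (at t)"
    by (auto intro!: derivative_eq_intros)
  have "(F has_real_derivative
      ((\<alpha> * t powr (\<alpha> - 1) * sin (x * t) + cos (x * t) * x * t powr \<alpha>) / x
       + \<alpha> * ((\<alpha>-1) * t powr (\<alpha> - 1 - 1) * cos (x * t) + - sin (x * t) * x * t powr (\<alpha> - 1)) / x^2)) (at t)"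
    unfolding F_def
    by (intro DERIV_add DERIV_cdivide DERIV_cmult DERIV_mult d1 d2 ds dc)
  moreover have "((\<alpha> * t powr (\<alpha> - 1) * sin (x * t) + cos (x * t) * x * t powr \<alpha>) / x
       + \<alpha> * ((\<alpha>-1) * t powr (\<alpha> - 1 - 1) * cos (x * t) + - sin (x * t) * x * t powr (\<alpha> - 1)) / x^2)
      = t powr \<alpha> * cos (x * t) + (\<alpha> * (\<alpha> - 1) / x^2) * (t powr (\<alpha> - 2) * cos (x * t))"
    using assms(3) unfolding e by (simp add: field_simps power2_eq_square)
  ultimately have "(F has_real_derivative t powr \<alpha> * cos (x * t) + (\<alpha> * (\<alpha> - 1) / x^2) * (t powr (\<alpha> - 2) * cos (x * t))) (at t)"
    by simp
  then show "(F has_vector_derivative t powr \<alpha> * cos (x * t) + (\<alpha> * (\<alpha> - 1) / x^2) * (t powr (\<alpha> - 2) * cos (x * t))) (at t within {\<delta>..pi})"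
    by (simp add: has_real_derivative_iff_has_vector_derivative has_vector_derivative_at_within)
qed

lemma J_bound:
  fixes \<alpha> x \<delta> :: real
  assumes "0 < \<delta>" "\<delta> \<le> pi"
  shows "\<bar>\<alpha> - 1\<bar> * \<bar>integral {\<delta>..pi} (\<lambda>t. t powr (\<alpha> - 2) * cos (x * t))\<bar> \<le> \<bar>pi powr (\<alpha>-1) - \<delta> powr (\<alpha>-1)\<bar>"
proof -
  have cg: "continuous_on {\<delta>..pi} (\<lambda>t. t powr (\<alpha> - 2) * cos (x * t))"
    using assms by (intro continuous_intros) auto
  have ce: "continuous_on {\<delta>..pi} (\<lambda>t. t powr (\<alpha> - 2))"
    using assms by (intro continuous_intros) auto
  have E: "((\<lambda>t. (\<alpha> - 1) * t powr (\<alpha> - 2)) has_integral (pi powr (\<alpha>-1) - \<delta> powr (\<alpha>-1))) {\<delta>..pi}"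
  proof (rule fundamental_theorem_of_calculus)
    show "\<delta> \<le> pi" by fact
    fix t assume t: "t \<in> {\<delta>..pi}"
    then have tp: "t > 0" using assms by auto
    have "((\<lambda>t. t powr (\<alpha>-1)) has_real_derivative (\<alpha>-1) * t powr (\<alpha> - 1 - 1)) (at t)"
      by (rule has_real_derivative_powr[OF tp])
    then show "((\<lambda>t. t powr (\<alpha>-1)) has_vector_derivative (\<alpha> - 1) * t powr (\<alpha> - 2)) (at t within {\<delta>..pi})"
      by (simp add: has_real_derivative_iff_has_vector_derivative has_vector_derivative_at_within)
  qed
  have "norm (integral {\<delta>..pi} (\<lambda>t. t powr (\<alpha> - 2) * cos (x * t))) \<le> integral {\<delta>..pi} (\<lambda>t. t powr (\<alpha> - 2))"
    by (rule integral_norm_bound_integral[OF integrable_continuous_interval[OF cg] integrable_continuous_interval[OF ce]])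
       (auto simp: abs_mult intro!: mult_left_le)
  hence "\<bar>\<alpha> - 1\<bar> * \<bar>integral {\<delta>..pi} (\<lambda>t. t powr (\<alpha> - 2) * cos (x * t))\<bar> \<le> \<bar>\<alpha> - 1\<bar> * integral {\<delta>..pi} (\<lambda>t. t powr (\<alpha> - 2))"
    by (intro mult_left_mono) auto
  also have "\<dots> = \<bar>(\<alpha> - 1) * integral {\<delta>..pi} (\<lambda>t. t powr (\<alpha> - 2))\<bar>"
    using integral_nonneg[OF integrable_continuous_interval[OF ce]] by (simp add: abs_mult)
  also have "(\<alpha> - 1) * integral {\<delta>..pi} (\<lambda>t. t powr (\<alpha> - 2)) = pi powr (\<alpha>-1) - \<delta> powr (\<alpha>-1)"
    using E integral_mult_right by (metis integral_unique)
  finally show ?thesis .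
qed

lemma acoef_decay:
  fixes \<alpha> :: real and n :: nat
  assumes "0 < \<alpha>" "\<alpha> \<le> 2" "n \<ge> 1"
  shows "\<bar>acoef \<alpha> (int n)\<bar> \<le> (1/pi) * (pi powr (1+\<alpha>) * real n powr (-1-\<alpha>)
            + 4 * pi powr (\<alpha>-1) / (real n)^2 + 4 * pi powr (\<alpha>-1) * real n powr (-1-\<alpha>))"
proof -
  define x where "x = real n"
  have xp: "x \<ge> 1" using assms by (simp add: x_def)
  define \<delta> where "\<delta> = pi / x"
  have dp: "0 < \<delta>" "\<delta> \<le> pi" using xp pi_gt_zero by (auto simp: \<delta>_def field_simps)
  define f where "f = (\<lambda>t::real. t powr \<alpha> * cos (x * t))"
  define g where "g = (\<lambda>t::real. t powr (\<alpha> - 2) * cos (x * t))"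
  define F where "F \<equiv> (\<lambda>t. t powr \<alpha> * sin (x * t) / x + \<alpha> * (t powr (\<alpha> - 1) * cos (x * t)) / x^2)"
  have cf: "continuous_on {0..pi} f" unfolding f_def by (rule cont_powr_cos0[OF assms(1)]) auto
  have fint: "f integrable_on {0..pi}" by (rule integrable_continuous_interval[OF cf])
  have cg: "continuous_on {\<delta>..pi} g" unfolding g_def using dp by (intro continuous_intros) auto
  have split: "integral {0..\<delta>} f + integral {\<delta>..pi} f = integral {0..pi} f"
    using Henstock_Kurzweil_Integration.integral_combine[where a=0 and c=\<delta> and b=pi and f=f] dp fint by auto
  have I1: "\<bar>integral {0..\<delta>} f\<bar> \<le> \<delta> * \<delta> powr \<alpha>"
  proof -
    have "norm (integral {0..\<delta>} f) \<le> integral {0..\<delta>} (\<lambda>_. \<delta> powr \<alpha>)"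
    proof (rule integral_norm_bound_integral)
      show "f integrable_on {0..\<delta>}" by (rule integrable_on_subinterval[OF fint]) (use dp in auto)
      show "(\<lambda>_. \<delta> powr \<alpha>) integrable_on {0..\<delta>}" by (rule integrable_const_ivl)
      fix t assume t: "t \<in> {0..\<delta>}"
      have "norm (f t) = t powr \<alpha> * \<bar>cos (x*t)\<bar>" by (simp add: f_def abs_mult)
      also have "\<dots> \<le> t powr \<alpha> * 1" by (intro mult_left_mono) auto
      also have "\<dots> \<le> \<delta> powr \<alpha>" using t assms(1) by (auto intro!: powr_mono2)
      finally show "norm (f t) \<le> \<delta> powr \<alpha>" .
    qed
    then show ?thesis using dp by simp
  qed
  have FTC: "((\<lambda>t. f t + (\<alpha> * (\<alpha> - 1) / x^2) * g t) has_integral (F pi - F \<delta>)) {\<delta>..pi}"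
    unfolding f_def g_def F_def by (rule FTC_I2) (use dp xp in auto)
  have gint: "g integrable_on {\<delta>..pi}" by (rule integrable_continuous_interval[OF cg])
  have fint2: "f integrable_on {\<delta>..pi}" by (rule integrable_on_subinterval[OF fint]) (use dp in auto)
  have I2eq: "integral {\<delta>..pi} f = F pi - F \<delta> - (\<alpha> * (\<alpha> - 1) / x^2) * integral {\<delta>..pi} g"
  proof -
    have "integral {\<delta>..pi} (\<lambda>t. f t + (\<alpha> * (\<alpha> - 1) / x^2) * g t) = F pi - F \<delta>"
      using FTC by (rule integral_unique)
    moreover have "integral {\<delta>..pi} (\<lambda>t. f t + (\<alpha> * (\<alpha> - 1) / x^2) * g t)
        = integral {\<delta>..pi} f + (\<alpha> * (\<alpha> - 1) / x^2) * integral {\<delta>..pi} g"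
    proof -
      have gi: "(\<lambda>t. (\<alpha> * (\<alpha> - 1) / x^2) * g t) integrable_on {\<delta>..pi}"
        using integrable_on_cmult_left[OF gint, of "\<alpha> * (\<alpha> - 1) / x^2"] by simp
      show ?thesis using integral_add[OF fint2 gi] integral_mult_right by metis
    qed
    ultimately show ?thesis by linarith
  qed
  have sinpi: "sin (x * pi) = 0" unfolding x_def by (metis sin_npi mult.commute)
  have sind: "sin (x * \<delta>) = 0" using xp by (simp add: \<delta>_def)
  have Fpi: "\<bar>F pi\<bar> \<le> \<alpha> * pi powr (\<alpha>-1) / x^2"
    using sinpi assms(1) by (simp add: F_def abs_mult divide_right_mono mult_left_le)
  have Fd: "\<bar>F \<delta>\<bar> \<le> \<alpha> * \<delta> powr (\<alpha>-1) / x^2"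
    using sind assms(1) by (simp add: F_def abs_mult divide_right_mono mult_left_le)
  have Jb: "\<bar>\<alpha> - 1\<bar> * \<bar>integral {\<delta>..pi} g\<bar> \<le> \<bar>pi powr (\<alpha>-1) - \<delta> powr (\<alpha>-1)\<bar>"
    unfolding g_def by (rule J_bound[OF dp])
  have I3: "\<bar>(\<alpha> * (\<alpha> - 1) / x^2) * integral {\<delta>..pi} g\<bar> \<le> \<alpha> * (pi powr (\<alpha>-1) + \<delta> powr (\<alpha>-1)) / x^2"
  proof -
    have "\<bar>(\<alpha> * (\<alpha> - 1) / x^2) * integral {\<delta>..pi} g\<bar> = \<alpha> / x^2 * (\<bar>\<alpha> - 1\<bar> * \<bar>integral {\<delta>..pi} g\<bar>)"
      using assms(1) by (simp add: abs_mult)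
    also have "\<dots> \<le> \<alpha> / x^2 * \<bar>pi powr (\<alpha>-1) - \<delta> powr (\<alpha>-1)\<bar>"
      using Jb assms(1) by (intro mult_left_mono) auto
    also have "\<dots> \<le> \<alpha> / x^2 * (pi powr (\<alpha>-1) + \<delta> powr (\<alpha>-1))"
    proof -
      have "0 \<le> pi powr (\<alpha>-1)" "0 \<le> \<delta> powr (\<alpha>-1)" by auto
      then have "\<bar>pi powr (\<alpha>-1) - \<delta> powr (\<alpha>-1)\<bar> \<le> pi powr (\<alpha>-1) + \<delta> powr (\<alpha>-1)" by linarith
      then show ?thesis using assms(1) by (intro mult_left_mono) auto
    qed
    finally show ?thesis by simp
  qed
  have I2: "\<bar>integral {\<delta>..pi} f\<bar> \<le> 2 * \<alpha> * (pi powr (\<alpha>-1) + \<delta> powr (\<alpha>-1)) / x^2"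
  proof -
    have "\<bar>integral {\<delta>..pi} f\<bar> \<le> \<alpha> * pi powr (\<alpha>-1) / x^2 + \<alpha> * \<delta> powr (\<alpha>-1) / x^2 + \<alpha> * (pi powr (\<alpha>-1) + \<delta> powr (\<alpha>-1)) / x^2"
      using I2eq Fpi Fd I3 by arith
    also have "\<dots> = 2 * \<alpha> * (pi powr (\<alpha>-1) + \<delta> powr (\<alpha>-1)) / x^2"
      using xp by (simp add: field_simps)
    finally show ?thesis .
  qed
  have tot: "\<bar>integral {0..pi} f\<bar> \<le> \<delta> * \<delta> powr \<alpha> + 4 * (pi powr (\<alpha>-1) + \<delta> powr (\<alpha>-1)) / x^2"
  proof -
    have "2 * \<alpha> * (pi powr (\<alpha>-1) + \<delta> powr (\<alpha>-1)) / x^2 \<le> 4 * (pi powr (\<alpha>-1) + \<delta> powr (\<alpha>-1)) / x^2"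
      using assms by (intro divide_right_mono mult_right_mono) auto
    then show ?thesis using split I1 I2 by linarith
  qed
  have e1: "\<delta> * \<delta> powr \<alpha> = pi powr (1+\<alpha>) * x powr (-1-\<alpha>)"
    using xp unfolding \<delta>_def
    by (simp add: powr_divide powr_add powr_minus powr_diff field_simps)
  have e2: "\<delta> powr (\<alpha>-1) / x^2 = pi powr (\<alpha>-1) * x powr (-1-\<alpha>)"
    using xp unfolding \<delta>_def
    by (simp add: powr_divide powr_add powr_minus powr_diff field_simps power2_eq_square)
  have "\<bar>acoef \<alpha> (int n)\<bar> = (1/pi) * \<bar>integral {0..pi} f\<bar>"
    by (simp add: acoef_def f_def x_def abs_mult)
  also have "\<dots> \<le> (1/pi) * (\<delta> * \<delta> powr \<alpha> + 4 * (pi powr (\<alpha>-1) + \<delta> powr (\<alpha>-1)) / x^2)"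
    using tot by (intro mult_left_mono) auto
  also have "\<delta> * \<delta> powr \<alpha> + 4 * (pi powr (\<alpha>-1) + \<delta> powr (\<alpha>-1)) / x^2
      = pi powr (1+\<alpha>) * x powr (-1-\<alpha>) + 4 * pi powr (\<alpha>-1) / x^2 + 4 * pi powr (\<alpha>-1) * x powr (-1-\<alpha>)"
    using e1 e2 by (simp add: add_divide_distrib distrib_left)
  finally show ?thesis by (simp add: x_def)
qed

lemma acoef_even: "acoef \<alpha> (- n) = acoef \<alpha> n"
  by (simp add: acoef_def)

lemma int_UNIV_split: "(UNIV::int set) = range int \<union> range (\<lambda>k. - int (Suc k))"
proof -
  have "n \<in> range int \<union> range (\<lambda>k. - int (Suc k))" for n :: int
  proof (cases "n \<ge> 0")
    case True then have "n = int (nat n)" by simp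
    then show ?thesis by blast
  next
    case False then have "n = - int (Suc (nat (-n-1)))" by simp
    then show ?thesis by blast
  qed
  then show ?thesis by blast
qed

lemma int_split_disj: "range int \<inter> range (\<lambda>k. - int (Suc k)) = {}"
  by auto

lemma summable_on_int_from_nat:
  fixes g :: "int \<Rightarrow> real"
  assumes nn: "\<And>n. g n \<ge> 0" and ev: "\<And>n. g (-n) = g n" and sm: "summable (\<lambda>k. g (int k))"
  shows "g summable_on UNIV"
proof -
  have nn1: "\<And>k. g (int k) \<ge> 0" by (rule nn)
  have s1: "(\<lambda>k. g (int k)) summable_on UNIV"
    using summable_on_UNIV_nonneg_real_iff[of "\<lambda>k. g (int k)", OF nn1] sm by blast
  have "summable (\<lambda>k. g (int (Suc k)))"
    using sm summable_Suc_iff[of "\<lambda>k. g (int k)"] by blast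
  moreover have "\<And>k. g (- int (Suc k)) = g (int (Suc k))" by (rule ev)
  ultimately have sm2: "summable (\<lambda>k. g (- int (Suc k)))" by presburger
  have nn2: "\<And>k. g (- int (Suc k)) \<ge> 0" by (rule nn)
  have s2: "(\<lambda>k. g (- int (Suc k))) summable_on UNIV"
    using summable_on_UNIV_nonneg_real_iff[of "\<lambda>k. g (- int (Suc k))", OF nn2] sm2 by blast
  have i1: "inj_on int UNIV" by (simp add: inj_on_def)
  have i2: "inj_on (\<lambda>k. - int (Suc k)) UNIV" by (simp add: inj_on_def)
  have a: "g summable_on range int"
    using summable_on_reindex[OF i1, of g] s1 unfolding comp_def by blast
  have b: "g summable_on range (\<lambda>k. - int (Suc k))"
    using summable_on_reindex[OF i2, of g] s2 unfolding comp_def by blast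
  show ?thesis
    using summable_on_Un_disjoint[OF a b int_split_disj] unfolding int_UNIV_split[symmetric] .
qed

lemma acoef_abs_summable:
  assumes "0 < \<alpha>" "\<alpha> \<le> 2"
  shows "(\<lambda>n. norm (acoef \<alpha> n)) summable_on UNIV"
proof (rule summable_on_int_from_nat)
  show "\<And>n. norm (acoef \<alpha> n) \<ge> 0" by simp
  show "\<And>n. norm (acoef \<alpha> (-n)) = norm (acoef \<alpha> n)" by (simp add: acoef_even)
  define c1 where "c1 = (1/pi) * pi powr (1+\<alpha>)"
  define c2 where "c2 = (1/pi) * (4 * pi powr (\<alpha>-1))"
  define B where "B = (\<lambda>k::nat. c1 * real k powr (-1-\<alpha>) + c2 * real k powr (-2) + c2 * real k powr (-1-\<alpha>))"
  have s1: "summable (\<lambda>k. real k powr (-1-\<alpha>))" using assms summable_real_powr_iff by auto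
  have s2: "summable (\<lambda>k. real k powr (-2))" using summable_real_powr_iff by auto
  have sB: "summable B" unfolding B_def
    using summable_add[OF summable_add[OF summable_mult[OF s1, of c1] summable_mult[OF s2, of c2]] summable_mult[OF s1, of c2]] .
  have bnd: "norm (norm (acoef \<alpha> (int k))) \<le> B k" if k: "k \<ge> 1" for k :: nat
  proof -
    have "real k powr (-2) = inverse ((real k)^2)"
      using k by (simp add: powr_minus powr_realpow)
    then have e: "4 * pi powr (\<alpha>-1) / (real k)^2 = 4 * pi powr (\<alpha>-1) * real k powr (-2)"
      by (simp add: divide_inverse)
    have "\<bar>acoef \<alpha> (int k)\<bar> \<le> (1/pi) * (pi powr (1+\<alpha>) * real k powr (-1-\<alpha>)
            + 4 * pi powr (\<alpha>-1) / (real k)^2 + 4 * pi powr (\<alpha>-1) * real k powr (-1-\<alpha>))"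
      by (rule acoef_decay[OF assms k])
    also have "\<dots> = B k" unfolding B_def c1_def c2_def e by (simp only: distrib_left mult.assoc)
    finally show ?thesis by simp
  qed
  show "summable (\<lambda>k. norm (acoef \<alpha> (int k)))"
  proof (rule summable_comparison_test_ev[OF _ sB])
    show "\<forall>\<^sub>F k in sequentially. norm (norm (acoef \<alpha> (int k))) \<le> B k"
      unfolding eventually_sequentially using bnd by blast
  qed
qed

lemma has_sum_int_from_nat:
  fixes f :: "int \<Rightarrow> 'b::topological_comm_monoid_add"
  assumes a: "((\<lambda>k. f (int k)) has_sum A) UNIV" and b: "((\<lambda>k. f (- int (Suc k))) has_sum B) UNIV"
  shows "(f has_sum (A + B)) UNIV"
proof -
  have i1: "inj_on int UNIV" by (simp add: inj_on_def)
  have i2: "inj_on (\<lambda>k. - int (Suc k)) UNIV" by (simp add: inj_on_def)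
  have a': "(f has_sum A) (range int)"
    using has_sum_reindex[OF i1, of f A] a by (simp add: comp_def)
  have b': "(f has_sum B) (range (\<lambda>k. - int (Suc k)))"
    using has_sum_reindex[OF i2, of f B] b by (simp add: comp_def)
  show ?thesis
    using has_sum_Un_disjoint[OF a' b' int_split_disj] unfolding int_UNIV_split[symmetric] .
qed

definition Pk :: "real \<Rightarrow> real \<Rightarrow> real" where
  "Pk r s = (1 - r^2) / (1 - 2 * r * cos s + r^2)"

lemma Pk_denom_pos: fixes r s :: real assumes "0 \<le> r" "r < 1" shows "1 - 2 * r * cos s + r^2 > 0"
proof -
  have "1 - 2 * r * cos s + r^2 = (1 - r)^2 + 2 * r * (1 - cos s)" by (simp add: power2_eq_square algebra_simps)
  moreover have "(1 - r)^2 > 0" using assms by simp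
  moreover have "2 * r * (1 - cos s) \<ge> 0" using assms by simp
  ultimately show ?thesis by linarith
qed

lemma Pk_nonneg: fixes r s :: real assumes "0 \<le> r" "r < 1" shows "Pk r s \<ge> 0"
  using Pk_denom_pos[OF assms, of s] assms unfolding Pk_def
  by (intro divide_nonneg_pos) (auto simp: power_le_one abs_square_le_1)

lemma geo_cos_sums:
  fixes r s :: real
  assumes "0 \<le> r" "r < 1"
  shows "(\<lambda>k. r ^ k * cos (real k * s)) sums ((1 - r * cos s) / (1 - 2 * r * cos s + r^2))"
proof -
  define z where "z = complex_of_real r * cis s"
  have nz: "norm z < 1" using assms by (simp add: z_def norm_mult)
  have "(\<lambda>k. z ^ k) sums (1 / (1 - z))" using geometric_sums[OF nz] by simp
  then have "(\<lambda>k. Re (z ^ k)) sums Re (1 / (1 - z))" by (rule sums_Re)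
  moreover have "Re (z ^ k) = r ^ k * cos (real k * s)" for k :: nat
    by (simp add: z_def power_mult_distrib Complex.DeMoivre)
  moreover have "Re (1 / (1 - z)) = (1 - r * cos s) / (1 - 2 * r * cos s + r^2)"
  proof -
    have "(1 - r * cos s)^2 + (r * sin s)^2 = 1 - 2 * r * cos s + r^2"
    proof -
      have h1: "r * (r * (cos s * cos s)) + r * (r * (sin s * sin s)) = r * r * (sin s * sin s + cos s * cos s)"
        by (simp only: distrib_left mult.assoc add.commute)
      have h2: "sin s * sin s + cos s * cos s = 1" using sin_cos_squared_add[of s] by (simp add: power2_eq_square)
      have h: "r * (r * (cos s * cos s)) + r * (r * (sin s * sin s)) = r * r" unfolding h1 h2 by simp
      show ?thesis using h by (simp add: power2_eq_square algebra_simps)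
    qed
    then show ?thesis by (simp add: Re_divide z_def)
  qed
  ultimately show ?thesis by simp
qed

lemma poisson_has_sum:
  fixes r s :: real
  assumes "0 \<le> r" "r < 1"
  shows "((\<lambda>n::int. r ^ nat \<bar>n\<bar> * cos (of_int n * s)) has_sum Pk r s) UNIV"
proof -
  define Q0 where "Q0 = (1 - r * cos s) / (1 - 2 * r * cos s + r^2)"
  have sr: "summable (\<lambda>k. r ^ k)" using assms by (simp add: summable_geometric)
  have nsum: "summable (\<lambda>k. norm (r ^ k * cos (real k * s)))"
    by (rule summable_comparison_test[OF _ sr]) (use assms in \<open>auto simp: abs_mult intro!: exI[of _ 0] mult_left_le\<close>)
  have s0: "(\<lambda>k. r ^ k * cos (real k * s)) sums Q0" unfolding Q0_def by (rule geo_cos_sums[OF assms])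
  have h0: "((\<lambda>k. r ^ k * cos (real k * s)) has_sum Q0) UNIV"
    by (rule norm_summable_imp_has_sum[OF nsum s0])
  have s1: "(\<lambda>k. r ^ Suc k * cos (real (Suc k) * s)) sums (Q0 - 1)"
    using s0 sums_Suc_iff[of "\<lambda>k. r ^ k * cos (real k * s)" "Q0 - 1"] by simp
  have nsum1: "summable (\<lambda>k. norm (r ^ Suc k * cos (real (Suc k) * s)))"
    using nsum summable_Suc_iff[of "\<lambda>k. norm (r ^ k * cos (real k * s))"] by simp
  have h1: "((\<lambda>k. r ^ Suc k * cos (real (Suc k) * s)) has_sum (Q0 - 1)) UNIV"
    by (rule norm_summable_imp_has_sum[OF nsum1 s1])
  have "((\<lambda>n::int. r ^ nat \<bar>n\<bar> * cos (of_int n * s)) has_sum (Q0 + (Q0 - 1))) UNIV"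
  proof (rule has_sum_int_from_nat)
    show "((\<lambda>k. r ^ nat \<bar>int k\<bar> * cos (real_of_int (int k) * s)) has_sum Q0) UNIV" using h0 by simp
    have "r ^ nat \<bar>- int (Suc k)\<bar> * cos (real_of_int (- int (Suc k)) * s) = r ^ Suc k * cos (real (Suc k) * s)" for k
      by (simp del: of_nat_Suc)
    then show "((\<lambda>k. r ^ nat \<bar>- int (Suc k)\<bar> * cos (real_of_int (- int (Suc k)) * s)) has_sum (Q0 - 1)) UNIV"
      using h1 by presburger
  qed
  moreover have "Q0 + (Q0 - 1) = Pk r s"
    using Pk_denom_pos[OF assms, of s] unfolding Q0_def Pk_def by (simp add: field_simps)
  ultimately show ?thesis by simp
qed

definition Kk :: "real \<Rightarrow> real \<Rightarrow> real \<Rightarrow> real" where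
  "Kk r \<theta> t = (Pk r (t - \<theta>) + Pk r (t + \<theta>)) / 2"

lemma Kk_has_sum:
  fixes r \<theta> t :: real
  assumes "0 \<le> r" "r < 1"
  shows "((\<lambda>n::int. r ^ nat \<bar>n\<bar> * cos (of_int n * \<theta>) * cos (of_int n * t)) has_sum Kk r \<theta> t) UNIV"
proof -
  have a: "((\<lambda>n::int. r ^ nat \<bar>n\<bar> * cos (of_int n * (t - \<theta>))) has_sum Pk r (t - \<theta>)) UNIV"
    by (rule poisson_has_sum[OF assms])
  have b: "((\<lambda>n::int. r ^ nat \<bar>n\<bar> * cos (of_int n * (t + \<theta>))) has_sum Pk r (t + \<theta>)) UNIV"
    by (rule poisson_has_sum[OF assms])
  have "((\<lambda>n::int. (1/2) * (r ^ nat \<bar>n\<bar> * cos (of_int n * (t - \<theta>)) + r ^ nat \<bar>n\<bar> * cos (of_int n * (t + \<theta>))))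
      has_sum ((1/2) * (Pk r (t - \<theta>) + Pk r (t + \<theta>)))) UNIV"
    by (intro has_sum_cmult_right has_sum_add a b)
  moreover have "(1/2) * (r ^ nat \<bar>n\<bar> * cos (of_int n * (t - \<theta>)) + r ^ nat \<bar>n\<bar> * cos (of_int n * (t + \<theta>)))
      = r ^ nat \<bar>n\<bar> * cos (of_int n * \<theta>) * cos (of_int n * t)" for n :: int
    by (simp add: right_diff_distrib distrib_left cos_diff cos_add algebra_simps)
  ultimately show ?thesis unfolding Kk_def by simp
qed

lemma rpow_summable:
  fixes r :: real
  assumes "0 \<le> r" "r < 1"
  shows "(\<lambda>n::int. r ^ nat \<bar>n\<bar>) summable_on UNIV"
  using poisson_has_sum[OF assms, of 0] summable_on_def by auto

lemma interchange:
  fixes \<phi> :: "real \<Rightarrow> real" and r \<theta> :: real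
  assumes cphi: "continuous_on {0..pi} \<phi>" and r: "0 \<le> r" "r < 1"
  shows "((\<lambda>n::int. r ^ nat \<bar>n\<bar> * cos (of_int n * \<theta>) * integral {0..pi} (\<lambda>t. \<phi> t * cos (of_int n * t)))
          has_sum integral {0..pi} (\<lambda>t. \<phi> t * Kk r \<theta> t)) UNIV"
proof -
  obtain B where B: "B > 0" "\<And>x. x \<in> {0..pi} \<Longrightarrow> norm (\<phi> x) \<le> B"
    using compact_imp_bounded[OF compact_continuous_image[OF cphi compact_Icc]] unfolding bounded_pos by auto
  define f where "f = (\<lambda>(n::int) t. r ^ nat \<bar>n\<bar> * cos (of_int n * \<theta>) * (\<phi> t * cos (of_int n * t)))"
  define g where "g = (\<lambda>n::int. r ^ nat \<bar>n\<bar> * cos (of_int n * \<theta>) * integral {0..pi} (\<lambda>t. \<phi> t * cos (of_int n * t)))"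
  define S where "S = (\<lambda>t. \<phi> t * Kk r \<theta> t)"
  have fS: "((\<lambda>n. f n t) has_sum S t) UNIV" for t
  proof -
    have "((\<lambda>n::int. \<phi> t * (r ^ nat \<bar>n\<bar> * cos (of_int n * \<theta>) * cos (of_int n * t))) has_sum (\<phi> t * Kk r \<theta> t)) UNIV"
      by (intro has_sum_cmult_right Kk_has_sum r)
    then show ?thesis unfolding f_def S_def by (simp add: algebra_simps)
  qed
  have fb: "norm (f n t) \<le> B * r ^ nat \<bar>n\<bar>" if "t \<in> {0..pi}" for n t
  proof -
    have "norm (f n t) = r ^ nat \<bar>n\<bar> * (\<bar>cos (of_int n * \<theta>)\<bar> * (norm (\<phi> t) * \<bar>cos (of_int n * t)\<bar>))"
      using r by (simp add: f_def abs_mult)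
    also have "\<dots> \<le> r ^ nat \<bar>n\<bar> * (1 * (B * 1))"
      using B(2)[OF that] r by (intro mult_left_mono mult_mono) auto
    finally show ?thesis by (simp add: mult.commute)
  qed
  have Ms: "(\<lambda>n. B * r ^ nat \<bar>n\<bar>) summable_on UNIV"
    using summable_on_cmult_right[OF rpow_summable[OF r]] by simp
  have ul: "uniform_limit {0..pi} (\<lambda>X t. \<Sum>n\<in>X. f n t) S (finite_subsets_at_top UNIV)"
    by (rule Weierstrass_m_test_general'[OF fb fS Ms]) auto
  have cf: "continuous_on {0..pi} (f n)" for n
    unfolding f_def by (intro continuous_intros cphi)
  obtain I J where I: "\<And>X. ((\<lambda>t. \<Sum>n\<in>X. f n t) has_integral I X) {0..pi}"
    and J: "(S has_integral J) {0..pi}" and IJ: "(I \<longlongrightarrow> J) (finite_subsets_at_top UNIV)"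
    using uniform_limit_integral[OF ul] cf by (metis continuous_on_sum finite_subsets_at_top_neq_bot)
  have fi: "(f n has_integral g n) {0..pi}" for n
  proof -
    have "(\<lambda>t. \<phi> t * cos (of_int n * t)) integrable_on {0..pi}"
      by (intro integrable_continuous_interval continuous_intros cphi)
    then have "((\<lambda>t. \<phi> t * cos (of_int n * t)) has_integral integral {0..pi} (\<lambda>t. \<phi> t * cos (of_int n * t))) {0..pi}"
      by (rule integrable_integral)
    then show ?thesis unfolding f_def g_def by (rule has_integral_mult_right)
  qed
  have IX: "I X = sum g X" for X
  proof (cases "finite X")
    case True
    have "((\<lambda>t. \<Sum>n\<in>X. f n t) has_integral sum g X) {0..pi}"
      by (rule has_integral_sum[OF True fi])
    then show ?thesis using I[of X] has_integral_unique by blast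
  next
    case False
    then show ?thesis using I[of X] has_integral_unique by fastforce
  qed
  have "(g has_sum J) UNIV"
    unfolding has_sum_def using IJ IX by (metis ext)
  moreover have "J = integral {0..pi} S" using J by (simp add: integral_unique)
  ultimately show ?thesis unfolding g_def S_def by simp
qed

lemma integral_cos_int:
  fixes n :: int
  shows "integral {0..pi} (\<lambda>t. 1 * cos (of_int n * t)) = (if n = 0 then pi else 0)"
proof (cases "n = 0")
  case True then show ?thesis by simp
next
  case False
  have "((\<lambda>t. cos (of_int n * t)) has_integral (sin (of_int n * pi) / of_int n - sin (of_int n * 0) / of_int n)) {0..pi}"
  proof (rule fundamental_theorem_of_calculus)
    show "0 \<le> pi" by simp
    fix t :: real
    have "((\<lambda>t. sin (of_int n * t) / of_int n) has_real_derivative cos (of_int n * t) * of_int n / of_int n) (at t)"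
      by (auto intro!: derivative_eq_intros)
    then show "((\<lambda>t. sin (of_int n * t) / of_int n) has_vector_derivative cos (of_int n * t)) (at t within {0..pi})"
      using False by (simp add: has_real_derivative_iff_has_vector_derivative has_vector_derivative_at_within)
  qed
  moreover have "sin (of_int n * pi) = 0" by (metis sin_npi_int mult.commute)
  ultimately show ?thesis using False by (simp add: integral_unique)
qed

lemma integral_cos_int':
  fixes n :: int
  shows "integral {0..pi} (\<lambda>t. cos (of_int n * t)) = (if n = 0 then pi else 0)"
  using integral_cos_int[of n] by simp

lemma Pk_cont: fixes r :: real assumes "0 \<le> r" "r < 1"
  shows "continuous_on S (\<lambda>t. Pk r (t + c))"
proof -
  have "continuous_on S (\<lambda>t. (1 - r^2) / (1 - 2 * r * cos (t + c) + r^2))"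
    using Pk_denom_pos[OF assms] by (intro continuous_intros) (auto simp: less_imp_neq[symmetric])
  then show ?thesis unfolding Pk_def .
qed

lemma Kk_cont: fixes r :: real assumes "0 \<le> r" "r < 1"
  shows "continuous_on S (Kk r \<theta>)"
proof -
  have "continuous_on S (\<lambda>t. (Pk r (t + (-\<theta>)) + Pk r (t + \<theta>)) / 2)"
    by (intro continuous_intros Pk_cont assms) auto
  then show ?thesis unfolding Kk_def by simp
qed

lemma Kk_nonneg: fixes r :: real assumes "0 \<le> r" "r < 1" shows "Kk r \<theta> t \<ge> 0"
  unfolding Kk_def using Pk_nonneg[OF assms] by (simp add: add_nonneg_nonneg)

lemma Kk_integral:
  fixes r \<theta> :: real assumes "0 \<le> r" "r < 1"
  shows "integral {0..pi} (Kk r \<theta>) = pi"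
proof -
  have h: "((\<lambda>n::int. r ^ nat \<bar>n\<bar> * cos (of_int n * \<theta>) * integral {0..pi} (\<lambda>t. 1 * cos (of_int n * t)))
          has_sum integral {0..pi} (\<lambda>t. 1 * Kk r \<theta> t)) UNIV"
    by (rule interchange[OF continuous_on_const assms])
  have h2: "((\<lambda>n::int. r ^ nat \<bar>n\<bar> * cos (of_int n * \<theta>) * integral {0..pi} (\<lambda>t. 1 * cos (of_int n * t)))
          has_sum pi) UNIV"
  proof -
    have "((\<lambda>n::int. r ^ nat \<bar>n\<bar> * cos (of_int n * \<theta>) * integral {0..pi} (\<lambda>t. 1 * cos (of_int n * t)))
          has_sum pi) {0}"
      using has_sum_finite[of "{0::int}" "\<lambda>n::int. r ^ nat \<bar>n\<bar> * cos (of_int n * \<theta>) * integral {0..pi} (\<lambda>t. 1 * cos (of_int n * t))"]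
      by (simp add: integral_cos_int)
    then show ?thesis
      by (rule has_sum_cong_neutral[THEN iffD1, rotated -1]) (auto simp: integral_cos_int')
  qed
  show ?thesis using has_sum_unique[OF h h2] by simp
qed

lemma cos_diff_sq: fixes t s :: real shows "(cos t - cos s)^2 \<le> 2 - 2 * cos (t - s)"
proof -
  have "(cos t - cos s)^2 + (sin t - sin s)^2 = 2 - 2 * cos (t - s)"
    by (simp add: power2_eq_square cos_diff algebra_simps)
  moreover have "(sin t - sin s)^2 \<ge> 0" by simp
  ultimately show ?thesis by linarith
qed

lemma unif_cont_powr:
  fixes \<alpha> \<epsilon> :: real assumes "0 < \<alpha>" "\<epsilon> > 0"
  shows "\<exists>\<eta>>0. \<forall>t\<in>{0..pi}. \<forall>u\<in>{0..pi}. \<bar>cos t - cos u\<bar> < \<eta> \<longrightarrow> \<bar>t powr \<alpha> - u powr \<alpha>\<bar> < \<epsilon>"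
proof -
  define w where "w = (\<lambda>x::real. arccos x powr \<alpha>)"
  have cw: "continuous_on {-1..1} w" unfolding w_def
    using assms arccos_lbound
    by (intro continuous_on_powr' continuous_on_arccos' continuous_on_const) auto
  have "uniformly_continuous_on {-1..1} w" by (rule compact_uniformly_continuous[OF cw compact_Icc])
  then obtain \<eta> where \<eta>: "\<eta> > 0" "\<And>x x'. x \<in> {-1..1} \<Longrightarrow> x' \<in> {-1..1} \<Longrightarrow> dist x' x < \<eta> \<Longrightarrow> dist (w x') (w x) < \<epsilon>"
    unfolding uniformly_continuous_on_def using assms(2) by metis
  show ?thesis
  proof (intro exI[of _ \<eta>] conjI ballI impI)
    show "\<eta> > 0" by fact
    fix t u :: real assume t: "t \<in> {0..pi}" and u: "u \<in> {0..pi}" and d: "\<bar>cos t - cos u\<bar> < \<eta>"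
    have "dist (w (cos t)) (w (cos u)) < \<epsilon>"
      using \<eta>(2)[of "cos u" "cos t"] d by (simp add: dist_real_def)
    moreover have "w (cos t) = t powr \<alpha>" "w (cos u) = u powr \<alpha>" using t u by (auto simp: w_def arccos_cos)
    ultimately show "\<bar>t powr \<alpha> - u powr \<alpha>\<bar> < \<epsilon>" by (simp add: dist_real_def)
  qed
qed

lemma Pk_far:
  fixes r s \<eta> :: real assumes "0 < r" "r < 1" "\<eta> > 0" "cos s \<le> 1 - \<eta>^2 / 2"
  shows "Pk r s \<le> (1 - r^2) / (r * \<eta>^2)"
proof -
  have e: "1 - 2 * r * cos s + r^2 = (1 - r)^2 + 2 * r * (1 - cos s)" by (simp add: power2_eq_square algebra_simps)
  have "2 * r * (1 - cos s) \<ge> 2 * r * (\<eta>^2/2)" using assms by (intro mult_left_mono) auto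
  then have D: "1 - 2 * r * cos s + r^2 \<ge> r * \<eta>^2" unfolding e by (simp add: add_increasing)
  have "0 \<le> 1 - r^2" using assms by (simp add: power_le_one abs_square_le_1)
  moreover have "r * \<eta>^2 > 0" using assms by simp
  ultimately show ?thesis unfolding Pk_def using D by (intro divide_left_mono) auto
qed

lemma pointwise_bound:
  fixes r s t \<theta> \<eta> \<epsilon> C :: real
  assumes r: "0 < r" "r < 1" and \<eta>: "\<eta> > 0" and \<epsilon>: "\<epsilon> > 0"
    and cont: "\<bar>cos t - cos \<theta>\<bar> < \<eta> \<Longrightarrow> \<bar>t powr \<alpha> - \<theta> powr \<alpha>\<bar> < \<epsilon>"
    and C: "\<bar>t powr \<alpha> - \<theta> powr \<alpha>\<bar> \<le> C"
    and s: "(cos t - cos \<theta>)^2 \<le> 2 - 2 * cos s"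
  shows "\<bar>t powr \<alpha> - \<theta> powr \<alpha>\<bar> * Pk r s \<le> \<epsilon> * Pk r s + C * ((1 - r^2) / (r * \<eta>^2))"
proof -
  have P0: "Pk r s \<ge> 0" using Pk_nonneg r by simp
  have C0: "C \<ge> 0" using C by linarith
  have q0: "(1 - r^2) / (r * \<eta>^2) \<ge> 0" using r \<eta> by (simp add: power_le_one abs_square_le_1)
  have eP: "\<epsilon> * Pk r s \<ge> 0" using \<epsilon> P0 by simp
  show ?thesis
  proof (cases "cos s \<le> 1 - \<eta>^2 / 2")
    case True
    have "\<bar>t powr \<alpha> - \<theta> powr \<alpha>\<bar> * Pk r s \<le> C * ((1 - r^2) / (r * \<eta>^2))"
      using C Pk_far[OF r \<eta> True] P0 by (intro mult_mono) auto
    then show ?thesis using eP by linarith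
  next
    case False
    then have "(cos t - cos \<theta>)^2 < \<eta>^2" using s by linarith
    then have "\<bar>cos t - cos \<theta>\<bar> < \<eta>"
    proof -
      assume h: "(cos t - cos \<theta>)^2 < \<eta>^2"
      show ?thesis
      proof (rule ccontr)
        assume "\<not> \<bar>cos t - cos \<theta>\<bar> < \<eta>"
        then have "\<eta>^2 \<le> \<bar>cos t - cos \<theta>\<bar>^2" using \<eta> by (intro power_mono) auto
        then show False using h by simp
      qed
    qed
    then have "\<bar>t powr \<alpha> - \<theta> powr \<alpha>\<bar> \<le> \<epsilon>" using cont by simp
    then have "\<bar>t powr \<alpha> - \<theta> powr \<alpha>\<bar> * Pk r s \<le> \<epsilon> * Pk r s" using P0 by (intro mult_right_mono) auto
    moreover have "C * ((1 - r^2) / (r * \<eta>^2)) \<ge> 0" by (rule mult_nonneg_nonneg[OF C0 q0])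
    ultimately show ?thesis by linarith
  qed
qed

lemma approx_identity:
  fixes \<alpha> r \<theta> \<eta> \<epsilon> :: real
  assumes \<alpha>: "0 < \<alpha>" and r: "0 < r" "r < 1" and \<eta>: "\<eta> > 0" and \<epsilon>: "\<epsilon> > 0"
    and \<theta>: "\<theta> \<in> {0..pi}"
    and cont: "\<And>t. t \<in> {0..pi} \<Longrightarrow> \<bar>cos t - cos \<theta>\<bar> < \<eta> \<Longrightarrow> \<bar>t powr \<alpha> - \<theta> powr \<alpha>\<bar> < \<epsilon>"
  shows "\<bar>(1/pi) * integral {0..pi} (\<lambda>t. t powr \<alpha> * Kk r \<theta> t) - \<theta> powr \<alpha>\<bar>
          \<le> \<epsilon> + pi powr \<alpha> * ((1 - r^2) / (r * \<eta>^2))"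
proof -
  define q where "q = (1 - r^2) / (r * \<eta>^2)"
  define C where "C = pi powr \<alpha>"
  have r0: "0 \<le> r" using r by simp
  have cK: "continuous_on {0..pi} (Kk r \<theta>)" by (rule Kk_cont[OF r0 r(2)])
  have cp: "continuous_on {0..pi} (\<lambda>t. t powr \<alpha>)"
    using \<alpha> by (intro continuous_on_powr' continuous_intros) auto
  have iK: "Kk r \<theta> integrable_on {0..pi}" by (rule integrable_continuous_interval[OF cK])
  have i1: "(\<lambda>t. t powr \<alpha> * Kk r \<theta> t) integrable_on {0..pi}"
    by (intro integrable_continuous_interval continuous_intros cK cp)
  have i2: "(\<lambda>t. (t powr \<alpha> - \<theta> powr \<alpha>) * Kk r \<theta> t) integrable_on {0..pi}"
    by (intro integrable_continuous_interval continuous_intros cK cp)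
  have i3: "(\<lambda>t. \<epsilon> * Kk r \<theta> t + C * q) integrable_on {0..pi}"
    by (intro integrable_continuous_interval continuous_intros cK)
  have iK2: "(\<lambda>t. \<theta> powr \<alpha> * Kk r \<theta> t) integrable_on {0..pi}"
    using integrable_on_cmult_left[OF iK, of "\<theta> powr \<alpha>"] by simp
  have iK3: "(\<lambda>t. \<epsilon> * Kk r \<theta> t) integrable_on {0..pi}"
    using integrable_on_cmult_left[OF iK, of "\<epsilon>"] by simp
  have KI: "integral {0..pi} (Kk r \<theta>) = pi" by (rule Kk_integral[OF r0 r(2)])
  have eq: "integral {0..pi} (\<lambda>t. (t powr \<alpha> - \<theta> powr \<alpha>) * Kk r \<theta> t)
        = integral {0..pi} (\<lambda>t. t powr \<alpha> * Kk r \<theta> t) - \<theta> powr \<alpha> * pi"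
  proof -
    have "integral {0..pi} (\<lambda>t. (t powr \<alpha> - \<theta> powr \<alpha>) * Kk r \<theta> t)
        = integral {0..pi} (\<lambda>t. t powr \<alpha> * Kk r \<theta> t - \<theta> powr \<alpha> * Kk r \<theta> t)"
      by (simp add: algebra_simps)
    also have "\<dots> = integral {0..pi} (\<lambda>t. t powr \<alpha> * Kk r \<theta> t) - integral {0..pi} (\<lambda>t. \<theta> powr \<alpha> * Kk r \<theta> t)"
      by (rule integral_diff[OF i1 iK2])
    also have "integral {0..pi} (\<lambda>t. \<theta> powr \<alpha> * Kk r \<theta> t) = \<theta> powr \<alpha> * pi"
      using KI by simp
    finally show ?thesis .
  qed
  have bnd: "norm (integral {0..pi} (\<lambda>t. (t powr \<alpha> - \<theta> powr \<alpha>) * Kk r \<theta> t))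
        \<le> integral {0..pi} (\<lambda>t. \<epsilon> * Kk r \<theta> t + C * q)"
  proof (rule integral_norm_bound_integral[OF i2 i3])
    fix t assume t: "t \<in> {0..pi}"
    have Cb: "\<bar>t powr \<alpha> - \<theta> powr \<alpha>\<bar> \<le> C"
    proof -
      have "t powr \<alpha> \<le> pi powr \<alpha>" "\<theta> powr \<alpha> \<le> pi powr \<alpha>" using t \<theta> \<alpha> by (auto intro!: powr_mono2)
      moreover have "t powr \<alpha> \<ge> 0" "\<theta> powr \<alpha> \<ge> 0" by auto
      ultimately show ?thesis unfolding C_def by linarith
    qed
    have b1: "\<bar>t powr \<alpha> - \<theta> powr \<alpha>\<bar> * Pk r (t - \<theta>) \<le> \<epsilon> * Pk r (t - \<theta>) + C * q"
      unfolding q_def by (rule pointwise_bound[OF r \<eta> \<epsilon> cont[OF t] Cb cos_diff_sq])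
    have b2: "\<bar>t powr \<alpha> - \<theta> powr \<alpha>\<bar> * Pk r (t + \<theta>) \<le> \<epsilon> * Pk r (t + \<theta>) + C * q"
    proof -
      have "(cos t - cos \<theta>)^2 \<le> 2 - 2 * cos (t - (-\<theta>))" using cos_diff_sq[of t "-\<theta>"] by simp
      then have "(cos t - cos \<theta>)^2 \<le> 2 - 2 * cos (t + \<theta>)" by simp
      from pointwise_bound[OF r \<eta> \<epsilon> cont[OF t] Cb this] show ?thesis unfolding q_def .
    qed
    have "norm ((t powr \<alpha> - \<theta> powr \<alpha>) * Kk r \<theta> t) = \<bar>t powr \<alpha> - \<theta> powr \<alpha>\<bar> * Kk r \<theta> t"
      using Kk_nonneg[OF r0 r(2)] by (simp add: abs_mult)
    also have "\<dots> = (\<bar>t powr \<alpha> - \<theta> powr \<alpha>\<bar> * Pk r (t - \<theta>) + \<bar>t powr \<alpha> - \<theta> powr \<alpha>\<bar> * Pk r (t + \<theta>)) / 2"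
      unfolding Kk_def by (simp add: algebra_simps add_divide_distrib)
    also have "\<dots> \<le> ((\<epsilon> * Pk r (t - \<theta>) + C * q) + (\<epsilon> * Pk r (t + \<theta>) + C * q)) / 2"
      using b1 b2 by simp
    also have "\<dots> = \<epsilon> * Kk r \<theta> t + C * q" unfolding Kk_def by (simp add: algebra_simps add_divide_distrib)
    finally show "norm ((t powr \<alpha> - \<theta> powr \<alpha>) * Kk r \<theta> t) \<le> \<epsilon> * Kk r \<theta> t + C * q" .
  qed
  have "integral {0..pi} (\<lambda>t. \<epsilon> * Kk r \<theta> t + C * q) = \<epsilon> * pi + C * q * pi"
  proof -
    have "integral {0..pi} (\<lambda>t. \<epsilon> * Kk r \<theta> t + C * q) = integral {0..pi} (\<lambda>t. \<epsilon> * Kk r \<theta> t) + integral {0..pi} (\<lambda>t. C * q)"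
      by (rule integral_add[OF iK3 integrable_const_ivl])
    then show ?thesis using KI by simp
  qed
  then have "\<bar>integral {0..pi} (\<lambda>t. t powr \<alpha> * Kk r \<theta> t) - \<theta> powr \<alpha> * pi\<bar> \<le> (\<epsilon> + C * q) * pi"
    using bnd eq by (simp add: algebra_simps)
  then have "\<bar>(integral {0..pi} (\<lambda>t. t powr \<alpha> * Kk r \<theta> t) - \<theta> powr \<alpha> * pi) / pi\<bar> \<le> \<epsilon> + C * q"
    by (simp add: field_simps)
  moreover have "(integral {0..pi} (\<lambda>t. t powr \<alpha> * Kk r \<theta> t) - \<theta> powr \<alpha> * pi) / pi
      = (1/pi) * integral {0..pi} (\<lambda>t. t powr \<alpha> * Kk r \<theta> t) - \<theta> powr \<alpha>"
    by (simp add: field_simps)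
  ultimately show ?thesis unfolding C_def q_def by simp
qed

lemma abel_cont:
  fixes b :: "int \<Rightarrow> real"
  assumes "(\<lambda>n. norm (b n)) summable_on UNIV"
  shows "continuous_on {0..1} (\<lambda>y::real. \<Sum>\<^sub>\<infinity>n. y ^ nat \<bar>n\<bar> * b n)"
proof -
  have ul: "uniform_limit {0..1} (\<lambda>X y. \<Sum>n\<in>X. y ^ nat \<bar>n\<bar> * b n) (\<lambda>y. \<Sum>\<^sub>\<infinity>n. y ^ nat \<bar>n\<bar> * b n) (finite_subsets_at_top UNIV)"
  proof (rule Weierstrass_m_test_general[OF _ assms])
    fix n :: int and y :: real assume y: "y \<in> {0..1}"
    have "norm (y ^ nat \<bar>n\<bar> * b n) = y ^ nat \<bar>n\<bar> * norm (b n)" using y by (simp add: abs_mult)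
    also have "\<dots> \<le> 1 * norm (b n)" using y by (intro mult_right_mono power_le_one) auto
    finally show "norm (y ^ nat \<bar>n\<bar> * b n) \<le> norm (b n)" by simp
  qed
  show ?thesis
    by (rule uniform_limit_theorem[OF _ ul]) (auto intro!: always_eventually continuous_intros)
qed

lemma inversion:
  fixes \<alpha> \<theta> :: real
  assumes \<alpha>: "0 < \<alpha>" "\<alpha> \<le> 2" and \<theta>: "\<theta> \<in> {0..pi}"
  shows "((\<lambda>n::int. acoef \<alpha> n * cos (of_int n * \<theta>)) has_sum \<theta> powr \<alpha>) UNIV"
proof -
  define b where "b = (\<lambda>n::int. acoef \<alpha> n * cos (of_int n * \<theta>))"
  have bs: "(\<lambda>n. norm (b n)) summable_on UNIV"
  proof (rule Infinite_Sum.abs_summable_on_comparison_test'[OF acoef_abs_summable[OF \<alpha>]])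
    fix n :: int
    have "norm (b n) = norm (acoef \<alpha> n) * \<bar>cos (of_int n * \<theta>)\<bar>" by (simp add: b_def abs_mult)
    also have "\<dots> \<le> norm (acoef \<alpha> n) * 1" by (intro mult_left_mono) auto
    finally show "norm (b n) \<le> norm (acoef \<alpha> n)" by simp
  qed
  have bsum: "b summable_on UNIV" using abs_summable_summable[OF bs] .
  define L where "L = infsum b UNIV"
  have hL: "(b has_sum L) UNIV" unfolding L_def using bsum by simp
  define G where "G = (\<lambda>y::real. \<Sum>\<^sub>\<infinity>n. y ^ nat \<bar>n\<bar> * b n)"
  have cG: "continuous_on {0..1} G" unfolding G_def by (rule abel_cont[OF bs])
  have G1: "G 1 = L" unfolding G_def L_def by simp
  have Gr: "G r = (1/pi) * integral {0..pi} (\<lambda>t. t powr \<alpha> * Kk r \<theta> t)" if r: "0 \<le> r" "r < 1" for r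
  proof -
    have cp: "continuous_on {0..pi} (\<lambda>t::real. t powr \<alpha>)"
      using \<alpha> by (intro continuous_on_powr' continuous_intros) auto
    have "((\<lambda>n::int. r ^ nat \<bar>n\<bar> * cos (of_int n * \<theta>) * integral {0..pi} (\<lambda>t. t powr \<alpha> * cos (of_int n * t)))
          has_sum integral {0..pi} (\<lambda>t. t powr \<alpha> * Kk r \<theta> t)) UNIV"
      by (rule interchange[OF cp r])
    then have "((\<lambda>n::int. (1/pi) * (r ^ nat \<bar>n\<bar> * cos (of_int n * \<theta>) * integral {0..pi} (\<lambda>t. t powr \<alpha> * cos (of_int n * t))))
          has_sum (1/pi) * integral {0..pi} (\<lambda>t. t powr \<alpha> * Kk r \<theta> t)) UNIV"
      by (rule has_sum_cmult_right)
    moreover have "(1/pi) * (r ^ nat \<bar>n\<bar> * cos (of_int n * \<theta>) * integral {0..pi} (\<lambda>t. t powr \<alpha> * cos (of_int n * t)))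
        = r ^ nat \<bar>n\<bar> * b n" for n
      by (simp add: b_def acoef_def)
    ultimately have "((\<lambda>n. r ^ nat \<bar>n\<bar> * b n) has_sum (1/pi) * integral {0..pi} (\<lambda>t. t powr \<alpha> * Kk r \<theta> t)) UNIV"
      by simp
    then show ?thesis unfolding G_def by (rule infsumI)
  qed
  have main: "\<bar>L - \<theta> powr \<alpha>\<bar> < 3 * \<epsilon>" if \<epsilon>: "\<epsilon> > 0" for \<epsilon>
  proof -
    obtain \<eta> where \<eta>: "\<eta> > 0" and ucont: "\<forall>t\<in>{0..pi}. \<forall>u\<in>{0..pi}. \<bar>cos t - cos u\<bar> < \<eta> \<longrightarrow> \<bar>t powr \<alpha> - u powr \<alpha>\<bar> < \<epsilon>"
      using unif_cont_powr[OF \<alpha>(1) \<epsilon>] by blast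
    have cont: "\<And>t. t \<in> {0..pi} \<Longrightarrow> \<bar>cos t - cos \<theta>\<bar> < \<eta> \<Longrightarrow> \<bar>t powr \<alpha> - \<theta> powr \<alpha>\<bar> < \<epsilon>"
      using ucont \<theta> by blast
    obtain d where d: "d > 0" and dG: "\<And>x'. x' \<in> {0..1} \<Longrightarrow> dist x' 1 < d \<Longrightarrow> dist (G x') (G 1) < \<epsilon>"
      using cG \<epsilon> unfolding continuous_on_iff by (metis atLeastAtMost_iff order_refl zero_le_one)
    define C where "C = pi powr \<alpha>"
    have C: "C > 0" unfolding C_def by simp
    define \<rho> where "\<rho> = min (d/2) (min (1/2) (\<epsilon> * \<eta>^2 / (4 * C)))"
    have \<rho>: "\<rho> > 0" "\<rho> \<le> 1/2" "\<rho> < d" "\<rho> \<le> \<epsilon> * \<eta>^2 / (4 * C)"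
      using d \<epsilon> \<eta> C by (auto simp: \<rho>_def)
    define r where "r = 1 - \<rho>"
    have r: "0 < r" "r < 1" "r \<ge> 1/2" using \<rho> by (auto simp: r_def)
    have q: "C * ((1 - r^2) / (r * \<eta>^2)) \<le> \<epsilon>"
    proof -
      have "(1 - r^2) / (r * \<eta>^2) \<le> 4 * \<rho> / \<eta>^2"
      proof -
        have "1 - r^2 = \<rho> * (2 - \<rho>)" by (simp add: r_def power2_eq_square algebra_simps)
        also have "\<dots> \<le> 2 * \<rho>" using \<rho> by (simp add: algebra_simps)
        also have "\<dots> \<le> (4 * \<rho> / \<eta>^2) * (r * \<eta>^2)" using \<rho> r \<eta> by (simp add: field_simps)
        finally show ?thesis using r \<eta> by (simp add: pos_divide_le_eq)
      qed
      then have "C * ((1 - r^2) / (r * \<eta>^2)) \<le> C * (4 * \<rho> / \<eta>^2)" using C by (intro mult_left_mono) auto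
      also have "\<dots> \<le> C * (4 * (\<epsilon> * \<eta>^2 / (4 * C)) / \<eta>^2)"
        using C \<eta> \<rho> by (intro mult_left_mono divide_right_mono) auto
      also have "\<dots> = \<epsilon>" using C \<eta> by (simp add: field_simps)
      finally show ?thesis .
    qed
    have a1: "\<bar>G r - L\<bar> < \<epsilon>" using dG[of r] r \<rho> G1 by (simp add: dist_real_def r_def)
    have a2: "\<bar>G r - \<theta> powr \<alpha>\<bar> \<le> \<epsilon> + C * ((1 - r^2) / (r * \<eta>^2))"
      unfolding Gr[OF less_imp_le[OF r(1)] r(2)] C_def
      by (rule approx_identity[OF \<alpha>(1) r(1,2) \<eta> \<epsilon> \<theta> cont])
    show ?thesis using a1 a2 q by linarith
  qed
  have "L = \<theta> powr \<alpha>"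
  proof (rule ccontr)
    assume "L \<noteq> \<theta> powr \<alpha>"
    then have "\<bar>L - \<theta> powr \<alpha>\<bar> / 4 > 0" by simp
    from main[OF this] show False by simp
  qed
  then show ?thesis using hL unfolding b_def by simp
qed

lemma root_sum:
  fixes N :: nat and x :: int
  assumes N: "N > 0"
  shows "(\<Sum>k<N. exp (2 * pi * \<i> * of_int x * of_nat k / of_nat N)) = (if int N dvd x then of_nat N else 0)"
proof -
  define z where "z = exp (2 * pi * \<i> * of_int x / of_nat N)"
  have zk: "exp (2 * pi * \<i> * of_int x * of_nat k / of_nat N) = z ^ k" for k
  proof -
    have "exp (2 * pi * \<i> * of_int x * of_nat k / of_nat N) = exp (of_nat k * (2 * pi * \<i> * of_int x / of_nat N))"
      by (simp add: field_simps)
    then show ?thesis unfolding z_def by (simp only: exp_of_nat_mult)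
  qed
  have zN: "z ^ N = 1"
  proof -
    have "z ^ N = exp (of_nat N * (2 * pi * \<i> * of_int x / of_nat N))" unfolding z_def by (simp only: exp_of_nat_mult)
    also have "\<dots> = exp ((2 * of_int x * pi) * \<i>)" using N by (simp add: field_simps)
    also have "\<dots> = 1" by (rule exp_integer_2pi) simp
    finally show ?thesis .
  qed
  have sz: "(\<Sum>k<N. exp (2 * pi * \<i> * of_int x * of_nat k / of_nat N)) = (\<Sum>k<N. z ^ k)"
    by (rule sum.cong[OF refl zk])
  show ?thesis unfolding sz
  proof (cases "int N dvd x")
    case True
    then obtain q where q: "x = int N * q" by blast
    have "z = exp ((2 * of_int q * pi) * \<i>)" unfolding z_def q using N by (simp add: field_simps)
    also have "\<dots> = 1" by (rule exp_integer_2pi) simp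
    finally have "z = 1" .
    then show "(\<Sum>k<N. z ^ k) = (if int N dvd x then of_nat N else 0)" using True by simp
  next
    case False
    have "z \<noteq> 1"
    proof
      assume "z = 1"
      then obtain n :: int where n: "Im (2 * pi * \<i> * of_int x / of_nat N) = of_int (2 * n) * pi"
        unfolding z_def exp_eq_1 by blast
      then have "2 * pi * of_int x / real N = 2 * of_int n * pi" by simp
      then have "real_of_int x = real N * of_int n" using N by (simp add: field_simps)
      then have "x = int N * n" by (metis of_int_eq_iff of_int_mult of_int_of_nat_eq)
      then show False using False by simp
    qed
    then have "(\<Sum>k<N. z ^ k) = 0" using zN by (simp add: sum_gp_strict)
    then show "(\<Sum>k<N. z ^ k) = (if int N dvd x then of_nat N else 0)" using False by simp
  qed
qed

lemma kernel_scale: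
  fixes h \<alpha> :: real and m :: int
  assumes h: "h > 0" and \<alpha>: "\<alpha> > 0"
  shows "kernel_c h \<alpha> m = h powr (-\<alpha>) * acoef \<alpha> m"
proof -
  define f where "f = (\<lambda>t::real. t powr \<alpha> * cos (of_int m * t))"
  define g where "g = (\<lambda>\<xi>::real. \<xi> powr \<alpha> * cos (real_of_int m * h * \<xi>))"
  define I where "I = integral {0..pi} f"
  have cf: "continuous_on {0..pi} f" unfolding f_def by (rule cont_powr_cos0[OF \<alpha>]) auto
  have fi: "(f has_integral I) {0..pi}" unfolding I_def
    by (rule integrable_integral[OF integrable_continuous_interval[OF cf]])
  have "((\<lambda>x. f (h * x)) has_integral (1 / \<bar>h\<bar>) *\<^sub>R I) ((\<lambda>x. x / h) ` {0..pi})"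
    using has_integral_stretch_real[OF fi, of h] h by simp
  then have "((\<lambda>x. f (h * x)) has_integral I / h) {0..pi/h}" using h by simp
  moreover have "f (h * x) = h powr \<alpha> * g x" if "x \<in> {0..pi/h}" for x
    using that h by (simp add: f_def g_def powr_mult mult.assoc mult.left_commute)
  ultimately have "((\<lambda>x. h powr \<alpha> * g x) has_integral I / h) {0..pi/h}"
    using has_integral_cong[of "{0..pi/h}" "\<lambda>x. f (h * x)" "\<lambda>x. h powr \<alpha> * g x"] by simp
  then have "((\<lambda>x. h powr (-\<alpha>) * (h powr \<alpha> * g x)) has_integral h powr (-\<alpha>) * (I / h)) {0..pi/h}"
    by (rule has_integral_mult_right)
  moreover have "h powr (-\<alpha>) * (h powr \<alpha> * g x) = g x" for x
    using h by (simp add: powr_minus field_simps)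
  ultimately have "(g has_integral h powr (-\<alpha>) * (I / h)) {0..pi/h}" by simp
  then have "integral {0..pi/h} g = h powr (-\<alpha>) * (I / h)" by (rule integral_unique)
  then show ?thesis
    unfolding kernel_c_def acoef_def g_def[symmetric] I_def[symmetric] f_def[symmetric]
    using h by (simp add: field_simps)
qed

lemma xi_bar_theta:
  fixes h :: real and N k :: nat
  assumes h: "h > 0" and N: "N > 0" and k: "k < N"
  shows "\<exists>\<theta>. 0 \<le> \<theta> \<and> \<theta> \<le> pi \<and> \<bar>xi_bar h N k\<bar> = \<theta> / h
            \<and> (\<forall>n::int. cos (of_int n * \<theta>) = cos (2 * pi * of_int n * of_nat k / of_nat N))"
proof (cases "real k < real N / 2")
  case True
  define \<theta> where "\<theta> = 2 * pi * real k / real N"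
  have "0 \<le> \<theta>" using N by (simp add: \<theta>_def)
  moreover have "\<theta> \<le> pi" using True N by (simp add: \<theta>_def field_simps)
  moreover have "\<bar>xi_bar h N k\<bar> = \<theta> / h"
    using True h N \<open>0 \<le> \<theta>\<close> by (simp add: xi_bar_def \<theta>_def field_simps)
  moreover have "\<forall>n::int. cos (of_int n * \<theta>) = cos (2 * pi * of_int n * of_nat k / of_nat N)"
    by (simp add: \<theta>_def field_simps)
  ultimately show ?thesis by blast
next
  case False
  define \<theta> where "\<theta> = 2 * pi - 2 * pi * real k / real N"
  have "real k / real N < 1" using k N by simp
  then have "2 * pi * (real k / real N) \<le> 2 * pi * 1" by (intro mult_left_mono) auto
  then have "0 \<le> \<theta>" unfolding \<theta>_def by simp
  moreover have "\<theta> \<le> pi" using False N by (simp add: \<theta>_def field_simps)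
  moreover have "\<bar>xi_bar h N k\<bar> = \<theta> / h"
  proof -
    have "xi_bar h N k = - \<theta> / h" using False h N by (simp add: xi_bar_def \<theta>_def field_simps)
    then show ?thesis using \<open>0 \<le> \<theta>\<close> h by simp
  qed
  moreover have "cos (of_int n * \<theta>) = cos (2 * pi * of_int n * of_nat k / of_nat N)" for n :: int
  proof -
    have "of_int n * \<theta> = (2 * pi) * of_int n - 2 * pi * of_int n * of_nat k / of_nat N"
      by (simp add: \<theta>_def algebra_simps)
    then show ?thesis by (simp add: cos_diff)
  qed
  ultimately show ?thesis by blast
qed

lemma has_sum_sum_fin:
  fixes f :: "'k \<Rightarrow> 'a \<Rightarrow> 'b::topological_comm_monoid_add"
  assumes "finite K" "\<And>k. k \<in> K \<Longrightarrow> (f k has_sum s k) A"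
  shows "((\<lambda>n. \<Sum>k\<in>K. f k n) has_sum (\<Sum>k\<in>K. s k)) A"
  using assms
proof (induction K rule: finite_induct)
  case empty then show ?case by simp
next
  case (insert x F)
  have "((\<lambda>n. f x n + (\<Sum>k\<in>F. f k n)) has_sum (s x + (\<Sum>k\<in>F. s k))) A"
    by (intro has_sum_add insert) auto
  then show ?case using insert by simp
qed

definition dl :: "nat \<Rightarrow> int \<Rightarrow> real" where "dl N x = (if int N dvd x then 1 else 0)"

lemma shifted_has_sum:
  fixes \<alpha> :: real and N :: nat and m :: int
  assumes \<alpha>: "0 < \<alpha>" "\<alpha> \<le> 2" and N: "N > 0"
  defines "R \<equiv> infsum (\<lambda>l::int. acoef \<alpha> (m + l * int N)) UNIV"
  shows "((\<lambda>l::int. acoef \<alpha> (m + l * int N)) has_sum R) UNIV"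
    and "((\<lambda>n. acoef \<alpha> n * dl N (n - m)) has_sum R) UNIV"
    and "((\<lambda>n. acoef \<alpha> n * dl N (n + m)) has_sum R) UNIV"
proof -
  define T where "T = range (\<lambda>l::int. m + l * int N)"
  have inj: "inj_on (\<lambda>l::int. m + l * int N) UNIV" using N by (auto simp: inj_on_def)
  have as: "acoef \<alpha> summable_on UNIV"
    using abs_summable_summable[OF acoef_abs_summable[OF \<alpha>]] .
  have asT: "acoef \<alpha> summable_on T" by (rule summable_on_subset_banach[OF as]) auto
  then have "(\<lambda>l::int. acoef \<alpha> (m + l * int N)) summable_on UNIV"
    using summable_on_reindex[OF inj, of "acoef \<alpha>"] unfolding T_def comp_def by blast
  then show h1: "((\<lambda>l::int. acoef \<alpha> (m + l * int N)) has_sum R) UNIV"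
    unfolding R_def by simp
  have hT: "(acoef \<alpha> has_sum R) T"
    using has_sum_reindex[OF inj, of "acoef \<alpha>" R] h1 unfolding T_def comp_def by blast
  have memT: "n \<in> T \<longleftrightarrow> int N dvd (n - m)" for n
  proof
    assume "n \<in> T" then show "int N dvd (n - m)" unfolding T_def by auto
  next
    assume "int N dvd (n - m)"
    then obtain l where "n - m = int N * l" by blast
    then have "n = m + l * int N" by (simp add: algebra_simps)
    then show "n \<in> T" unfolding T_def by blast
  qed
  show h2: "((\<lambda>n. acoef \<alpha> n * dl N (n - m)) has_sum R) UNIV"
  proof -
    have "((\<lambda>n. acoef \<alpha> n * dl N (n - m)) has_sum R) UNIV \<longleftrightarrow> (acoef \<alpha> has_sum R) T"
      by (rule has_sum_cong_neutral) (auto simp: dl_def memT)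
    then show ?thesis using hT by blast
  qed
  show "((\<lambda>n. acoef \<alpha> n * dl N (n + m)) has_sum R) UNIV"
  proof -
    have inj2: "inj_on (uminus :: int \<Rightarrow> int) UNIV" by (simp add: inj_on_def)
    have e: "((\<lambda>n. acoef \<alpha> n * dl N (n + m)) \<circ> uminus) = (\<lambda>n. acoef \<alpha> n * dl N (n - m))"
    proof
      fix n :: int
      have "int N dvd (- n + m) \<longleftrightarrow> int N dvd (n - m)"
        by (metis dvd_minus_iff minus_diff_eq add.commute diff_conv_add_uminus)
      then show "((\<lambda>n. acoef \<alpha> n * dl N (n + m)) \<circ> uminus) n = acoef \<alpha> n * dl N (n - m)"
        by (simp add: dl_def acoef_even)
    qed
    have "surj (uminus :: int \<Rightarrow> int)" by (rule surjI[of _ uminus]) simp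
    then show ?thesis using has_sum_reindex[OF inj2, of "\<lambda>n. acoef \<alpha> n * dl N (n + m)" R] h2
      unfolding e by simp
  qed
qed

lemma cos_times_root:
  fixes N :: nat and n m :: int
  assumes N: "N > 0"
  shows "(\<Sum>k<N. complex_of_real (cos (2 * pi * of_int n * of_nat k / of_nat N)) * exp (- (2 * pi * \<i> * of_int m * of_nat k / of_nat N)))
       = of_nat N / 2 * complex_of_real (dl N (n - m) + dl N (n + m))"
proof -
  have t: "complex_of_real (cos (2 * pi * of_int n * of_nat k / of_nat N)) * exp (- (2 * pi * \<i> * of_int m * of_nat k / of_nat N))
      = (exp (2 * pi * \<i> * of_int (n - m) * of_nat k / of_nat N) + exp (2 * pi * \<i> * of_int (- (n + m)) * of_nat k / of_nat N)) / 2" for k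
  proof -
    have "complex_of_real (cos (2 * pi * of_int n * of_nat k / of_nat N)) = cos (complex_of_real (2 * pi * of_int n * of_nat k / of_nat N))"
      by (simp only: cos_of_real)
    also have "\<dots> = (exp (\<i> * complex_of_real (2 * pi * of_int n * of_nat k / of_nat N)) + exp (- (\<i> * complex_of_real (2 * pi * of_int n * of_nat k / of_nat N)))) / 2"
      by (simp add: cos_exp_eq)
    finally have c: "complex_of_real (cos (2 * pi * of_int n * of_nat k / of_nat N)) = \<dots>" .
    have Nz: "(of_nat N :: complex) \<noteq> 0" using N by simp
    show ?thesis unfolding c
      using Nz by (simp add: field_simps exp_add[symmetric] distrib_right)
  qed
  have "(\<Sum>k<N. complex_of_real (cos (2 * pi * of_int n * of_nat k / of_nat N)) * exp (- (2 * pi * \<i> * of_int m * of_nat k / of_nat N)))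
      = ((\<Sum>k<N. exp (2 * pi * \<i> * of_int (n - m) * of_nat k / of_nat N)) + (\<Sum>k<N. exp (2 * pi * \<i> * of_int (- (n + m)) * of_nat k / of_nat N))) / 2"
    unfolding t by (simp only: sum.distrib[symmetric] sum_divide_distrib[symmetric])
  also have "\<dots> = of_nat N / 2 * complex_of_real (dl N (n - m) + dl N (n + m))"
  proof -
    have "int N dvd - (n + m) \<longleftrightarrow> int N dvd (n + m)" by (rule dvd_minus_iff)
    then show ?thesis unfolding root_sum[OF N] by (simp add: dl_def)
  qed
  finally show ?thesis .
qed

lemma dft_identity:
  fixes \<alpha> h :: real and N :: nat and m :: int
  assumes \<alpha>: "0 < \<alpha>" "\<alpha> \<le> 2" and h: "h > 0" and N: "N > 0"
  shows "((\<lambda>l::int. complex_of_real (kernel_c h \<alpha> (m + l * int N))) has_sum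
     (\<Sum>k<N. complex_of_real (\<bar>xi_bar h N k\<bar> powr \<alpha>) * exp (- (2 * pi * \<i> * of_int m * of_nat k / of_nat N))) / of_nat N) UNIV"
proof -
  define R where "R = infsum (\<lambda>l::int. acoef \<alpha> (m + l * int N)) UNIV"
  note sh = shifted_has_sum[OF \<alpha> N, of m, folded R_def]
  define c where "c = (\<lambda>k::nat. exp (- (2 * pi * \<i> * of_int m * of_nat k / of_nat N)))"
  define d where "d = (\<lambda>k::nat. \<bar>xi_bar h N k\<bar> powr \<alpha>)"
  have hk: "((\<lambda>n::int. acoef \<alpha> n * cos (2 * pi * of_int n * of_nat k / of_nat N)) has_sum (h powr \<alpha> * d k)) UNIV"
    if k: "k < N" for k
  proof -
    obtain \<theta> where \<theta>: "0 \<le> \<theta>" "\<theta> \<le> pi" "\<bar>xi_bar h N k\<bar> = \<theta> / h"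
      and cs: "\<forall>n::int. cos (of_int n * \<theta>) = cos (2 * pi * of_int n * of_nat k / of_nat N)"
      using xi_bar_theta[OF h N k] by blast
    have "((\<lambda>n::int. acoef \<alpha> n * cos (of_int n * \<theta>)) has_sum \<theta> powr \<alpha>) UNIV"
      by (rule inversion[OF \<alpha>]) (use \<theta> in auto)
    moreover have "\<theta> powr \<alpha> = h powr \<alpha> * d k"
      unfolding d_def \<theta>(3) using h \<theta> by (simp add: powr_divide)
    ultimately show ?thesis using cs by simp
  qed
  have hk2: "((\<lambda>n::int. complex_of_real (acoef \<alpha> n * cos (2 * pi * of_int n * of_nat k / of_nat N)) * c k)
      has_sum (complex_of_real (h powr \<alpha> * d k) * c k)) UNIV" if k: "k < N" for k
    by (rule has_sum_cmult_left[OF has_sum_of_real[OF hk[OF k]]])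
  have hs: "((\<lambda>n::int. \<Sum>k<N. complex_of_real (acoef \<alpha> n * cos (2 * pi * of_int n * of_nat k / of_nat N)) * c k)
      has_sum (\<Sum>k<N. complex_of_real (h powr \<alpha> * d k) * c k)) UNIV"
  proof (rule has_sum_sum_fin)
    fix k assume "k \<in> {..<N}"
    then have "k < N" by simp
    then show "((\<lambda>n::int. complex_of_real (acoef \<alpha> n * cos (2 * pi * of_int n * of_nat k / of_nat N)) * c k)
      has_sum (complex_of_real (h powr \<alpha> * d k) * c k)) UNIV" by (rule hk2)
  qed simp
  have tm_eq: "(\<Sum>k<N. complex_of_real (acoef \<alpha> n * cos (2 * pi * of_int n * of_nat k / of_nat N)) * c k)
      = complex_of_real (acoef \<alpha> n * (dl N (n - m) + dl N (n + m))) * (of_nat N / 2)" for n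
  proof -
    have "(\<Sum>k<N. complex_of_real (acoef \<alpha> n * cos (2 * pi * of_int n * of_nat k / of_nat N)) * c k)
        = complex_of_real (acoef \<alpha> n) * (\<Sum>k<N. complex_of_real (cos (2 * pi * of_int n * of_nat k / of_nat N)) * c k)"
      by (simp add: sum_distrib_left mult.assoc)
    also have "\<dots> = complex_of_real (acoef \<alpha> n) * (of_nat N / 2 * complex_of_real (dl N (n - m) + dl N (n + m)))"
      unfolding c_def by (simp only: cos_times_root[OF N])
    finally show ?thesis by (simp add: algebra_simps)
  qed
  have h2: "((\<lambda>n. acoef \<alpha> n * (dl N (n - m) + dl N (n + m))) has_sum (R + R)) UNIV"
    using has_sum_add[OF sh(2) sh(3)] by (simp add: distrib_left)
  have h3: "((\<lambda>n. complex_of_real (acoef \<alpha> n * (dl N (n - m) + dl N (n + m))) * (of_nat N / 2))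
      has_sum (complex_of_real (R + R) * (of_nat N / 2))) UNIV"
    by (rule has_sum_cmult_left[OF has_sum_of_real[OF h2]])
  have eq: "(\<Sum>k<N. complex_of_real (h powr \<alpha> * d k) * c k) = complex_of_real (R + R) * (of_nat N / 2)"
    using has_sum_unique[OF hs] h3 unfolding tm_eq by blast
  have "(\<Sum>k<N. complex_of_real (d k) * c k) / of_nat N = complex_of_real (h powr (-\<alpha>) * R)"
  proof -
    have "(\<Sum>k<N. complex_of_real (h powr \<alpha> * d k) * c k) = complex_of_real (h powr \<alpha>) * (\<Sum>k<N. complex_of_real (d k) * c k)"
      by (simp add: sum_distrib_left mult.assoc)
    then have "complex_of_real (h powr \<alpha>) * (\<Sum>k<N. complex_of_real (d k) * c k) = complex_of_real R * of_nat N"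
      using eq by (simp add: field_simps)
    then have "(\<Sum>k<N. complex_of_real (d k) * c k) = complex_of_real R * of_nat N / complex_of_real (h powr \<alpha>)"
      using h by (simp add: field_simps)
    then show ?thesis using N h by (simp add: powr_minus field_simps)
  qed
  moreover have "((\<lambda>l::int. complex_of_real (kernel_c h \<alpha> (m + l * int N))) has_sum complex_of_real (h powr (-\<alpha>) * R)) UNIV"
  proof -
    have "((\<lambda>l::int. h powr (-\<alpha>) * acoef \<alpha> (m + l * int N)) has_sum (h powr (-\<alpha>) * R)) UNIV"
      by (rule has_sum_cmult_right[OF sh(1)])
    then have "((\<lambda>l::int. kernel_c h \<alpha> (m + l * int N)) has_sum (h powr (-\<alpha>) * R)) UNIV"
      by (simp add: kernel_scale[OF h \<alpha>(1)])
    then show ?thesis by (rule has_sum_of_real)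
  qed
  ultimately show ?thesis unfolding c_def d_def by simp
qed

definition Qc :: "nat \<Rightarrow> complex mat" where
  "Qc N = mat N N (\<lambda>(i, k). exp (- (2 * pi * \<i> * of_nat (i * k) / of_nat N)) / of_real (sqrt (real N)))"

lemma sqrt_sq_c: "complex_of_real (sqrt (real N)) * complex_of_real (sqrt (real N)) = of_nat N"
  by (simp only: of_real_mult[symmetric] real_sqrt_mult_self) simp

lemma prod_entry1:
  fixes N a b k :: nat
  shows "exp (2 * pi * \<i> * of_nat (k * a) / of_nat N) / complex_of_real (sqrt (real N))
       * (exp (- (2 * pi * \<i> * of_nat (k * b) / of_nat N)) / complex_of_real (sqrt (real N)))
       = exp (2 * pi * \<i> * of_int (int a - int b) * of_nat k / of_nat N) / of_nat N"
proof -
  have arg: "2 * pi * \<i> * of_nat (k * a) / of_nat N + - (2 * pi * \<i> * of_nat (k * b) / of_nat N)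
      = 2 * pi * \<i> * of_int (int a - int b) * of_nat k / (of_nat N :: complex)"
  proof -
    have "2 * pi * \<i> * of_nat (k * a) / of_nat N + - (2 * pi * \<i> * of_nat (k * b) / of_nat N)
        = (2 * pi * \<i> * of_nat (k * a) - 2 * pi * \<i> * of_nat (k * b)) / (of_nat N :: complex)"
      by (simp add: diff_divide_distrib)
    also have "2 * pi * \<i> * of_nat (k * a) - 2 * pi * \<i> * of_nat (k * b) = 2 * pi * \<i> * of_int (int a - int b) * (of_nat k :: complex)"
      by (simp only: of_nat_mult of_int_diff of_int_of_nat_eq) (simp add: right_diff_distrib mult_ac)
    finally show ?thesis .
  qed
  have e: "exp (2 * pi * \<i> * of_nat (k * a) / of_nat N) * exp (- (2 * pi * \<i> * of_nat (k * b) / of_nat N))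
      = exp (2 * pi * \<i> * of_int (int a - int b) * of_nat k / of_nat N)"
    by (simp only: exp_add[symmetric] arg)
  have "exp (2 * pi * \<i> * of_nat (k * a) / of_nat N) / complex_of_real (sqrt (real N))
       * (exp (- (2 * pi * \<i> * of_nat (k * b) / of_nat N)) / complex_of_real (sqrt (real N)))
      = (exp (2 * pi * \<i> * of_nat (k * a) / of_nat N) * exp (- (2 * pi * \<i> * of_nat (k * b) / of_nat N)))
        / (complex_of_real (sqrt (real N)) * complex_of_real (sqrt (real N)))"
    by (simp only: times_divide_times_eq)
  then show ?thesis unfolding e sqrt_sq_c .
qed

lemma prod_entry2:
  fixes N a b k :: nat
  shows "exp (- (2 * pi * \<i> * of_nat (a * k) / of_nat N)) / complex_of_real (sqrt (real N))
       * (exp (2 * pi * \<i> * of_nat (b * k) / of_nat N) / complex_of_real (sqrt (real N)))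
       = exp (2 * pi * \<i> * of_int (int b - int a) * of_nat k / of_nat N) / of_nat N"
proof -
  have e1: "a * k = k * a" "b * k = k * b" by simp_all
  have "\<And>x y :: complex. x * y = y * x" by simp
  then show ?thesis unfolding e1 using prod_entry1[of k b N a] by metis
qed

lemma dvd_small: fixes a b N :: nat assumes "a < N" "b < N" shows "int N dvd (int a - int b) \<longleftrightarrow> a = b"
proof
  assume d: "int N dvd (int a - int b)"
  show "a = b"
  proof (rule ccontr)
    assume "a \<noteq> b"
    then have "int a - int b \<noteq> 0" by simp
    then have "\<bar>int N\<bar> \<le> \<bar>int a - int b\<bar>" using d by (rule dvd_imp_le_int)
    then show False using assms by linarith
  qed
qed simp

lemma QFT_carrier: "QFT N \<in> carrier_mat N N" by (simp add: QFT_def)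
lemma Qc_carrier: "Qc N \<in> carrier_mat N N" by (simp add: Qc_def)

lemma QFT_Qc: assumes N: "N > 0" shows "QFT N * Qc N = 1\<^sub>m N"
proof (rule eq_matI)
  fix a b assume a: "a < dim_row (1\<^sub>m N)" and b: "b < dim_col (1\<^sub>m N)"
  then have a': "a < N" and b': "b < N" by auto
  have "(QFT N * Qc N) $$ (a, b) = (\<Sum>k<N. exp (2 * pi * \<i> * of_nat (k * a) / of_nat N) / complex_of_real (sqrt (real N))
       * (exp (- (2 * pi * \<i> * of_nat (k * b) / of_nat N)) / complex_of_real (sqrt (real N))))"
    using a' b' by (simp add: QFT_def Qc_def scalar_prod_def atLeast0LessThan)
  also have "\<dots> = (\<Sum>k<N. exp (2 * pi * \<i> * of_int (int a - int b) * of_nat k / of_nat N)) / of_nat N"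
    by (simp only: prod_entry1 sum_divide_distrib)
  also have "\<dots> = 1\<^sub>m N $$ (a, b)"
    unfolding root_sum[OF N] using a' b' N by (simp add: dvd_small)
  finally show "(QFT N * Qc N) $$ (a, b) = 1\<^sub>m N $$ (a, b)" .
qed (auto simp: QFT_def Qc_def)

lemma Qc_QFT: assumes N: "N > 0" shows "Qc N * QFT N = 1\<^sub>m N"
proof (rule eq_matI)
  fix a b assume a: "a < dim_row (1\<^sub>m N)" and b: "b < dim_col (1\<^sub>m N)"
  then have a': "a < N" and b': "b < N" by auto
  have "(Qc N * QFT N) $$ (a, b) = (\<Sum>k<N. exp (- (2 * pi * \<i> * of_nat (a * k) / of_nat N)) / complex_of_real (sqrt (real N))
       * (exp (2 * pi * \<i> * of_nat (b * k) / of_nat N) / complex_of_real (sqrt (real N))))"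
    using a' b' by (simp add: QFT_def Qc_def scalar_prod_def atLeast0LessThan)
  also have "\<dots> = (\<Sum>k<N. exp (2 * pi * \<i> * of_int (int b - int a) * of_nat k / of_nat N)) / of_nat N"
    by (simp only: prod_entry2 sum_divide_distrib)
  also have "\<dots> = 1\<^sub>m N $$ (a, b)"
    unfolding root_sum[OF N] using a' b' N by (auto simp: dvd_small)
  finally show "(Qc N * QFT N) $$ (a, b) = 1\<^sub>m N $$ (a, b)" .
qed (auto simp: QFT_def Qc_def)

lemma mat_inv_QFT: assumes N: "N > 0" shows "mat_inv N (QFT N) = Qc N"
  unfolding mat_inv_def
proof (rule the_equality)
  show "Qc N \<in> carrier_mat N N \<and> QFT N * Qc N = 1\<^sub>m N \<and> Qc N * QFT N = 1\<^sub>m N"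
    using Qc_carrier QFT_Qc[OF N] Qc_QFT[OF N] by blast
  fix B assume B: "B \<in> carrier_mat N N \<and> QFT N * B = 1\<^sub>m N \<and> B * QFT N = 1\<^sub>m N"
  have Bc: "B \<in> carrier_mat N N" using B by blast
  have "B = (Qc N * QFT N) * B" using Qc_QFT[OF N] left_mult_one_mat[OF Bc] by simp
  also have "\<dots> = Qc N * (QFT N * B)" using B Qc_carrier QFT_carrier by (metis assoc_mult_mat)
  also have "\<dots> = Qc N" using B right_mult_one_mat[OF Qc_carrier[of N]] by simp
  finally show "B = Qc N" .
qed

lemma A_tilde_entry:
  fixes \<alpha> h :: real and N i j :: nat
  assumes N: "N > 0" and i: "i < N" and j: "j < N"
  shows "A_tilde \<alpha> h N $$ (i, j) = (\<Sum>k<N. complex_of_real (\<bar>xi_bar h N k\<bar> powr \<alpha>)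
            * exp (- (2 * pi * \<i> * of_int (int i - int j) * of_nat k / of_nat N))) / of_nat N"
proof -
  define f where "f = (\<lambda>k. complex_of_real (\<bar>xi_bar h N k\<bar> powr \<alpha>))"
  have "A_tilde \<alpha> h N = Qc N * mat_diag N f * QFT N"
    unfolding A_tilde_def mat_inv_QFT[OF N] f_def ..
  also have "Qc N * mat_diag N f = mat N N (\<lambda>(i, j). Qc N $$ (i, j) * f j)"
    by (rule mat_diag_mult_right[OF Qc_carrier])
  finally have A: "A_tilde \<alpha> h N = mat N N (\<lambda>(i, j). Qc N $$ (i, j) * f j) * QFT N" .
  have "A_tilde \<alpha> h N $$ (i, j) = (\<Sum>k<N. (Qc N $$ (i, k) * f k) * QFT N $$ (k, j))"
    unfolding A using i j QFT_carrier[of N]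
    by (simp add: index_mult_mat scalar_prod_def atLeast0LessThan)
  also have "\<dots> = (\<Sum>k<N. f k * exp (- (2 * pi * \<i> * of_int (int i - int j) * of_nat k / of_nat N)) / of_nat N)"
  proof (rule sum.cong[OF refl])
    fix k assume "k \<in> {..<N}"
    then have k: "k < N" by simp
    have "Qc N $$ (i, k) * f k * QFT N $$ (k, j)
        = f k * (exp (- (2 * pi * \<i> * of_nat (i * k) / of_nat N)) / complex_of_real (sqrt (real N))
           * (exp (2 * pi * \<i> * of_nat (j * k) / of_nat N) / complex_of_real (sqrt (real N))))"
      using i j k by (simp add: Qc_def QFT_def mult.commute)
    also have "\<dots> = f k * (exp (2 * pi * \<i> * of_int (int j - int i) * of_nat k / of_nat N) / of_nat N)"
      by (simp only: prod_entry2)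
    also have "exp (2 * pi * \<i> * of_int (int j - int i) * of_nat k / of_nat N)
        = exp (- (2 * pi * \<i> * of_int (int i - int j) * of_nat k / of_nat N))"
    proof -
      have "2 * pi * \<i> * of_int (int j - int i) * of_nat k / of_nat N
          = - (2 * pi * \<i> * of_int (int i - int j) * (of_nat k :: complex) / of_nat N)"
        unfolding minus_divide_left by (simp add: algebra_simps)
      then show ?thesis by simp
    qed
    finally show "Qc N $$ (i, k) * f k * QFT N $$ (k, j)
        = f k * exp (- (2 * pi * \<i> * of_int (int i - int j) * of_nat k / of_nat N)) / of_nat N" by simp
  qed
  also have "\<dots> = (\<Sum>k<N. f k * exp (- (2 * pi * \<i> * of_int (int i - int j) * of_nat k / of_nat N))) / of_nat N"
    by (simp only: sum_divide_distrib)
  finally show ?thesis unfolding f_def .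
qed

theorem proposition1:
  fixes h \<alpha> :: real and n N i j :: nat
  assumes "h > 0" and "0 < \<alpha>" and "\<alpha> \<le> 2" and "n > 0" and "N = 2 ^ n"
    and "i < N" and "j < N"
  shows "((\<lambda>l::int. of_real (kernel_c h \<alpha> (int i - int j + l * int N))) has_sum (A_tilde \<alpha> h N $$ (i, j))) UNIV
       \<and> ((\<lambda>l::int. of_real (kernel_c h \<alpha> (int i - int j + l * int N))) has_sum ((A_tilde \<alpha> h N - A_toep \<alpha> h N) $$ (i, j))) (UNIV - {0})"
proof -
  have N: "N > 0" using assms(5) by simp
  have h1: "((\<lambda>l::int. complex_of_real (kernel_c h \<alpha> (int i - int j + l * int N))) has_sum (A_tilde \<alpha> h N $$ (i, j))) UNIV"
    unfolding A_tilde_entry[OF N assms(6,7)]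
    by (rule dft_identity[OF assms(2,3,1) N])
  have h0: "((\<lambda>l::int. complex_of_real (kernel_c h \<alpha> (int i - int j + l * int N))) has_sum
      complex_of_real (kernel_c h \<alpha> (int i - int j))) {0}"
    using has_sum_finite[of "{0::int}" "\<lambda>l::int. complex_of_real (kernel_c h \<alpha> (int i - int j + l * int N))"] by simp
  have h2: "((\<lambda>l::int. complex_of_real (kernel_c h \<alpha> (int i - int j + l * int N))) has_sum
      (A_tilde \<alpha> h N $$ (i, j) - complex_of_real (kernel_c h \<alpha> (int i - int j)))) (UNIV - {0})"
    by (rule has_sum_Diff[OF h1 h0]) simp
  have dimT: "A_toep \<alpha> h N \<in> carrier_mat N N" by (simp add: A_toep_def)
  have "(A_tilde \<alpha> h N - A_toep \<alpha> h N) $$ (i, j) = A_tilde \<alpha> h N $$ (i, j) - A_toep \<alpha> h N $$ (i, j)"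
    using dimT assms(6,7) by (simp add: index_minus_mat)
  also have "A_toep \<alpha> h N $$ (i, j) = complex_of_real (kernel_c h \<alpha> (int i - int j))"
    using assms(6,7) by (simp add: A_toep_def)
  finally show ?thesis using h1 h2 by simp
qed

end
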